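(* For every $\varepsilon>0$, with $\mathcal D_\varepsilon$ the value defined in the context, $\mathrm{ALG}\le\frac{2+\varepsilon}{\varepsilon}\,\mathcal D_\varepsilon$.
   Context: Network. $S,T,R,D$ are pairwise disjoint finite sets (sources, transmitters, receivers, destinations). Each transmitter $t\in T$ is attached to a source $s(t)\in S$ via a link of integer delay $d(s(t),t)\ge 0$; each receiver $r\in R$ is attached to a destination $d(r)\in D$ via a link of integer delay $d(r,d(r))\ge 0$. A set $E_R\subseteq T\times R$ of reconfigurable edges is given, each $e\in E_R$ with integer delay $d(e)\ge 1$. A set $E_\ell\subseteq S\times D$ of fixed links is given, each with integer delay $\ge0$. Two edges of $E_R$ are adjacent if they share a transmitter or a receiver (an edge is adjacent to itself). Packets. $\Pi$ is a finite set of unit-size packets; packet $p$ has weight $w_p>0$, release time $r_p\in\mathbb Z_{\ge1}$, source $s_p$, destination $d_p$. Let $E(p)=\{(t,r)\in E_R: s(t)=s_p,\ d(r)=d_p\}$; assume $E(p)\neq\emptyset$ for all $p$. $\Pi_\ell$ is the set of packets with $(s_p,d_p)\in E_\ell$, and $\ell_p:=d(s_p,d_p)$ for them. Fix a total order $\prec$ on $\Pi$ with $r_p<r_q\Rightarrow p\prec q$. Algorithm ALG. Packets are processed in the order $\prec$; $p$ is processed at time $r_p$, before transmission step $r_p$. A packet assigned to a reconfigurable edge $e$ is split into $d(e)$ chunks of weight $w_p/d(e)$ assigned to $e$; $p(c)$, $w_c$, $e(c)$ denote the packet, weight and edge of chunk $c$. A chunk is pending until transmitted; $W(C)$ is the total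 weight of a set $C$ of chunks. When $p$ is processed, $B(p)$ is the set of pending chunks of packets $p'\prec p$; for $e=(t,r)\in E(p)$, $\mathrm{Adj}(p,e)$ = chunks of $B(p)$ whose edge is adjacent to $e$, $H(p,e)=\{c\in\mathrm{Adj}(p,e):w_c\ge w_p/d(e)\}$, $L(p,e)=\mathrm{Adj}(p,e)\setminus H(p,e)$, and $\mathrm{imp}(p,e)=w_p(d(s_p,t)+\frac{d(e)+1}{2}+d(r,d_p))+w_p|H(p,e)|+d(e)W(L(p,e))$. With $e^*\in\arg\min_{e\in E(p)}\mathrm{imp}(p,e)$: if $p\in\Pi_\ell$ and $w_p\ell_p\le\mathrm{imp}(p,e^* )$, $p$ is sent over its fixed link (latency $w_p\ell_p$); otherwise $p$ is assigned to $e(p):=e^*$ and split into chunks. Scheduler: at each integer $\tau\ge1$, build $M_\tau$ greedily over pending chunks in order of decreasing weight (ties by $\prec$ on packets, then arbitrary), adding $c$ iff no chunk already in $M_\tau$ has an edge adjacent to $e(c)$; chunks of $M_\tau$ are transmitted at step $\tau$. If chunk $c$ of $p$ is transmitted at step $\tau_c$ via $e(p)=(t,r)$, its completion time is $f_c=\tau_c+1+d(s_p,t)+d(r,d_p)$, and $c$ is active at integer times $\tau$ with $r_p\le\tau<f_c$. The cost is $\mathrm{ALG}=\sum_{p\text{ sent on fixed link}}w_p\ell_p+\sum_{\text{chunks }c}w_c(f_c-r_{p(c)})$. Dual assignment: $\alpha_p=w_p\ell_p$ if $p$ is sent over its fixed link, and $\alpha_p=\mathrm{imp}(p,e(p))$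 (computed when $p$ is processed) otherwise; for $t\in T$ and integer $\tau\ge1$, $\beta_{t,\tau}$ is the total weight of chunks active at $\tau$ whose edge has transmitter $t$, and $\beta_{r,\tau}$ ($r\in R$) likewise with receiver $r$. For $\varepsilon>0$ define $$\mathcal D_\varepsilon=\sum_{p\in\Pi}\alpha_p-\frac{1}{2+\varepsilon}\Big(\sum_{t\in T}\sum_{\tau\ge1}\beta_{t,\tau}+\sum_{r\in R}\sum_{\tau\ge1}\beta_{r,\tau}\Big).$$ *)

theory Defs
  imports "HOL-Analysis.Analysis"
begin

text \<open>Sources, transmitters, receivers and destinations live in four separate
types (hence are pairwise disjoint).  All delays are natural numbers (integers >= 0).\<close>

record ('s, 't, 'r, 'd) network =
  nS   :: "'s set"
  nT   :: "'t set"
  nR   :: "'r set"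
  nD   :: "'d set"
  src  :: "'t \<Rightarrow> 's"
  dst  :: "'r \<Rightarrow> 'd"
  dST  :: "'t \<Rightarrow> nat"             (* d(s(t),t) *)
  dRD  :: "'r \<Rightarrow> nat"             (* d(r,d(r)) *)
  ER   :: "('t \<times> 'r) set"          (* reconfigurable edges *)
  dE   :: "'t \<times> 'r \<Rightarrow> nat"
  El   :: "('s \<times> 'd) set"          (* fixed links *)
  dl   :: "'s \<times> 'd \<Rightarrow> nat"

definition wf_network :: "('s, 't, 'r, 'd) network \<Rightarrow> bool" where
  "wf_network N \<longleftrightarrow>
     finite (nS N) \<and> finite (nT N) \<and> finite (nR N) \<and> finite (nD N) \<and>
     (\<forall>t\<in>nT N. src N t \<in> nS N) \<and> (\<forall>r\<in>nR N. dst N r \<in> nD N) \<and>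
     ER N \<subseteq> nT N \<times> nR N \<and> (\<forall>e\<in>ER N. dE N e \<ge> 1) \<and>
     El N \<subseteq> nS N \<times> nD N"

record ('s, 'd, 'p) packets =
  Pi   :: "'p set"
  wt   :: "'p \<Rightarrow> real"
  rel  :: "'p \<Rightarrow> nat"
  sp   :: "'p \<Rightarrow> 's"
  dp   :: "'p \<Rightarrow> 'd"
  prec :: "('p \<times> 'p) set"          (* strict total order \<prec>; (p,q) \<in> prec means p \<prec> q *)

definition Epk :: "('s, 't, 'r, 'd) network \<Rightarrow> ('s, 'd, 'p) packets \<Rightarrow> 'p \<Rightarrow> ('t \<times> 'r) set" where
  "Epk N K p = {(t, r) \<in> ER N. src N t = sp K p \<and> dst N r = dp K p}"

definition wf_packets :: "('s, 't, 'r, 'd) network \<Rightarrow> ('s, 'd, 'p) packets \<Rightarrow> bool" where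
  "wf_packets N K \<longleftrightarrow>
     finite (Pi K) \<and>
     (\<forall>p\<in>Pi K. wt K p > 0 \<and> rel K p \<ge> 1 \<and> sp K p \<in> nS N \<and> dp K p \<in> nD N \<and> Epk N K p \<noteq> {}) \<and>
     strict_linear_order_on (Pi K) (prec K) \<and>
     (\<forall>p\<in>Pi K. \<forall>q\<in>Pi K. rel K p < rel K q \<longrightarrow> (p, q) \<in> prec K)"

definition Pl :: "('s, 't, 'r, 'd) network \<Rightarrow> ('s, 'd, 'p) packets \<Rightarrow> 'p set" where
  "Pl N K = {p \<in> Pi K. (sp K p, dp K p) \<in> El N}"

definition lat :: "('s, 't, 'r, 'd) network \<Rightarrow> ('s, 'd, 'p) packets \<Rightarrow> 'p \<Rightarrow> nat" where
  "lat N K p = dl N (sp K p, dp K p)"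

definition adjacent :: "'t \<times> 'r \<Rightarrow> 't \<times> 'r \<Rightarrow> bool" where
  "adjacent e e' \<longleftrightarrow> fst e = fst e' \<or> snd e = snd e'"

text \<open>A run is described by asg (None = sent over its fixed link,
Some e = assigned to reconfigurable edge e) and tx, the transmission step of each
chunk.  Chunk i (i < d(e)) of packet p is the pair (p,i).\<close>

type_synonym ('t, 'r, 'p) assignment = "'p \<Rightarrow> ('t \<times> 'r) option"

definition chunks :: "('s, 't, 'r, 'd) network \<Rightarrow> ('s, 'd, 'p) packets \<Rightarrow> ('t, 'r, 'p) assignment \<Rightarrow> ('p \<times> nat) set" where
  "chunks N K asg = {(p, i). p \<in> Pi K \<and> asg p \<noteq> None \<and> i < dE N (the (asg p))}"

definition cedge :: "('t, 'r, 'p) assignment \<Rightarrow> 'p \<times> nat \<Rightarrow> 't \<times> 'r" where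
  "cedge asg c = the (asg (fst c))"

definition cweight :: "('s, 't, 'r, 'd) network \<Rightarrow> ('s, 'd, 'p) packets \<Rightarrow> ('t, 'r, 'p) assignment \<Rightarrow> 'p \<times> nat \<Rightarrow> real" where
  "cweight N K asg c = wt K (fst c) / real (dE N (cedge asg c))"

text \<open>B(p): chunks of packets p' \<prec> p still pending when p is processed (before step r_p).\<close>
definition Bset where
  "Bset N K asg (tx :: 'p \<times> nat \<Rightarrow> nat) p =
     {c \<in> chunks N K asg. (fst c, p) \<in> prec K \<and> rel K p \<le> tx c}"

definition AdjS where
  "AdjS N K asg tx p e = {c \<in> Bset N K asg tx p. adjacent (cedge asg c) e}"

definition HS where
  "HS N K asg tx p e = {c \<in> AdjS N K asg tx p e. cweight N K asg c \<ge> wt K p / real (dE N e)}"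

definition LS where
  "LS N K asg tx p e = AdjS N K asg tx p e - HS N K asg tx p e"

definition imp :: "('s, 't, 'r, 'd) network \<Rightarrow> ('s, 'd, 'p) packets \<Rightarrow> ('t, 'r, 'p) assignment
                    \<Rightarrow> ('p \<times> nat \<Rightarrow> nat) \<Rightarrow> 'p \<Rightarrow> 't \<times> 'r \<Rightarrow> real" where
  "imp N K asg tx p e =
     wt K p * (real (dST N (fst e)) + (real (dE N e) + 1) / 2 + real (dRD N (snd e)))
     + wt K p * real (card (HS N K asg tx p e))
     + real (dE N e) * (\<Sum>c\<in>LS N K asg tx p e. cweight N K asg c)"

definition valid_decisions where
  "valid_decisions N K asg tx \<longleftrightarrow>
     (\<forall>p\<in>Pi K. \<exists>e. is_arg_min (imp N K asg tx p) (\<lambda>e. e \<in> Epk N K p) e \<and>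
        (if p \<in> Pl N K \<and> wt K p * real (lat N K p) \<le> imp N K asg tx p e
         then asg p = None else asg p = Some e))"

definition greedy :: "('t, 'r, 'p) assignment \<Rightarrow> ('p \<times> nat) list \<Rightarrow> ('p \<times> nat) set" where
  "greedy asg L = foldl (\<lambda>M c. if \<exists>c'\<in>M. adjacent (cedge asg c') (cedge asg c) then M else insert c M) {} L"

definition chunk_before where
  "chunk_before N K asg c c' \<longleftrightarrow>
     cweight N K asg c > cweight N K asg c' \<or>
     (cweight N K asg c = cweight N K asg c' \<and> ((fst c, fst c') \<in> prec K \<or> fst c = fst c'))"

definition pending where
  "pending N K asg (tx :: 'p \<times> nat \<Rightarrow> nat) \<tau> = {c \<in> chunks N K asg. rel K (fst c) \<le> \<tau> \<and> \<tau> \<le> tx c}"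

definition valid_schedule where
  "valid_schedule N K asg tx \<longleftrightarrow>
     (\<forall>c\<in>chunks N K asg. rel K (fst c) \<le> tx c) \<and>
     (\<forall>\<tau>::nat. \<tau> \<ge> 1 \<longrightarrow> (\<exists>L. distinct L \<and> set L = pending N K asg tx \<tau> \<and>
         sorted_wrt (chunk_before N K asg) L \<and>
         {c \<in> chunks N K asg. tx c = \<tau>} = greedy asg L))"

definition valid_run where
  "valid_run N K asg tx \<longleftrightarrow> valid_decisions N K asg tx \<and> valid_schedule N K asg tx"

definition completion where
  "completion N asg (tx :: 'p \<times> nat \<Rightarrow> nat) c =
     tx c + 1 + dST N (fst (cedge asg c)) + dRD N (snd (cedge asg c))"

definition ALG where
  "ALG N K asg tx =
     (\<Sum>p\<in>{p \<in> Pi K. asg p = None}. wt K p * real (lat N K p)) +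
     (\<Sum>c\<in>chunks N K asg. cweight N K asg c * (real (completion N asg tx c) - real (rel K (fst c))))"

definition alpha where
  "alpha N K asg tx p =
     (case asg p of None \<Rightarrow> wt K p * real (lat N K p) | Some e \<Rightarrow> imp N K asg tx p e)"

definition active where
  "active N K asg tx c (\<tau>::nat) \<longleftrightarrow> rel K (fst c) \<le> \<tau> \<and> \<tau> < completion N asg tx c"

definition betaT where
  "betaT N K asg tx t \<tau> =
     (\<Sum>c\<in>{c \<in> chunks N K asg. active N K asg tx c \<tau> \<and> fst (cedge asg c) = t}. cweight N K asg c)"

definition betaR where
  "betaR N K asg tx r \<tau> =
     (\<Sum>c\<in>{c \<in> chunks N K asg. active N K asg tx c \<tau> \<and> snd (cedge asg c) = r}. cweight N K asg c)"

definition Dual where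
  "Dual N K asg tx (\<epsilon>::real) =
     (\<Sum>p\<in>Pi K. alpha N K asg tx p)
     - 1 / (2 + \<epsilon>) * ((\<Sum>t\<in>nT N. infsum (betaT N K asg tx t) {1..})
                       + (\<Sum>r\<in>nR N. infsum (betaR N K asg tx r) {1..}))"

end

theory Submission
  imports Defs
begin


lemma adjacent_sym: "adjacent a b = adjacent b a" by (auto simp: adjacent_def)
lemma adjacent_refl: "adjacent a a" by (auto simp: adjacent_def)

abbreviation gstep where "gstep asg \<equiv> (\<lambda>M c. if \<exists>c'\<in>M. adjacent (cedge asg c') (cedge asg c) then M else insert c M)"

lemma fold_mono: "M \<subseteq> foldl (gstep asg) M L"
proof (induction L arbitrary: M)
  case (Cons a L)
  have "M \<subseteq> gstep asg M a" by auto
  then show ?case using Cons.IH[of "gstep asg M a"] by simp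
qed simp

lemma fold_sub: "foldl (gstep asg) M L \<subseteq> M \<union> set L"
proof (induction L arbitrary: M)
  case (Cons a L)
  have "foldl (gstep asg) M (a#L) = foldl (gstep asg) (gstep asg M a) L" by simp
  also have "\<dots> \<subseteq> gstep asg M a \<union> set L" by (rule Cons.IH)
  also have "\<dots> \<subseteq> M \<union> set (a#L)" by auto
  finally show ?case .
qed simp

lemma fold_indep:
  "(\<forall>x\<in>M. \<forall>y\<in>M. x \<noteq> y \<longrightarrow> \<not> adjacent (cedge asg x) (cedge asg y)) \<Longrightarrow>
   x \<in> foldl (gstep asg) M L \<Longrightarrow> y \<in> foldl (gstep asg) M L \<Longrightarrow> x \<noteq> y \<Longrightarrow> \<not> adjacent (cedge asg x) (cedge asg y)"
proof (induction L arbitrary: M)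
  case Nil then show ?case by auto
next
  case (Cons a L)
  show ?case
  proof (rule Cons.IH[of "gstep asg M a"])
    show "\<forall>x\<in>gstep asg M a. \<forall>y\<in>gstep asg M a. x \<noteq> y \<longrightarrow> \<not> adjacent (cedge asg x) (cedge asg y)"
      using Cons.prems(1) by (auto simp: adjacent_sym)
  qed (use Cons.prems in auto)
qed

lemma fold_block:
  "c \<in> set L \<Longrightarrow> c \<notin> foldl (gstep asg) M L \<Longrightarrow> c \<notin> M \<Longrightarrow>
   \<exists>xs ys c'. L = xs @ c # ys \<and> c' \<in> M \<union> set xs \<and> c' \<in> foldl (gstep asg) M L \<and> adjacent (cedge asg c') (cedge asg c)"
proof (induction L arbitrary: M)
  case Nil then show ?case by auto
next
  case (Cons a L)
  show ?case
  proof (cases "a = c")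
    case True
    have "gstep asg M c \<subseteq> foldl (gstep asg) M (a # L)" using fold_mono[of "gstep asg M c" asg L] True by simp
    with Cons.prems True have "\<exists>c'\<in>M. adjacent (cedge asg c') (cedge asg c)" by (auto split: if_splits)
    then obtain c' where "c' \<in> M" "adjacent (cedge asg c') (cedge asg c)" by blast
    moreover have "a # L = [] @ c # L" using True by simp
    moreover have "c' \<in> foldl (gstep asg) M (a#L)" using fold_mono[of M asg "a#L"] \<open>c' \<in> M\<close> by blast
    ultimately show ?thesis by blast
  next
    case False
    have "c \<in> set L" using Cons.prems False by auto
    moreover have "c \<notin> foldl (gstep asg) (gstep asg M a) L" using Cons.prems by simp
    moreover have "c \<notin> gstep asg M a" using Cons.prems False by auto
    ultimately obtain xs ys c' where h: "L = xs @ c # ys" "c' \<in> gstep asg M a \<union> set xs"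
      "c' \<in> foldl (gstep asg) (gstep asg M a) L" "adjacent (cedge asg c') (cedge asg c)"
      using Cons.IH by blast
    have "c' \<in> M \<union> set (a # xs)" using h(2) by (auto split: if_splits)
    then show ?thesis using h by (intro exI[of _ "a#xs"] exI[of _ ys] exI[of _ c']) auto
  qed
qed

lemma greedy_indep: "x \<in> greedy asg L \<Longrightarrow> y \<in> greedy asg L \<Longrightarrow> x \<noteq> y \<Longrightarrow> \<not> adjacent (cedge asg x) (cedge asg y)"
  unfolding greedy_def using fold_indep[of "{}" asg] by blast

lemma greedy_block: "c \<in> set L \<Longrightarrow> c \<notin> greedy asg L \<Longrightarrow>
   \<exists>xs ys c'. L = xs @ c # ys \<and> c' \<in> set xs \<and> c' \<in> greedy asg L \<and> adjacent (cedge asg c') (cedge asg c)"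
  unfolding greedy_def using fold_block[of c L asg "{}"] by auto



lemma count_pairs:
  fixes f :: "nat \<Rightarrow> nat"
  assumes inj: "inj_on f {..<n}"
  shows "2 * (\<Sum>i<n. card {j. j<n \<and> f j < f i}) = n * (n - 1)"
proof -
  define S where "S = {..<n::nat}"
  define A where "A = Sigma S (\<lambda>i. {j\<in>S. f j < f i})"
  define B where "B = Sigma S (\<lambda>i. {j\<in>S. f i < f j})"
  define D where "D = (S \<times> S) - {(i,i)| i. i \<in> S}"
  have fS: "finite S" by (simp add: S_def)
  have cA: "card A = (\<Sum>i<n. card {j. j<n \<and> f j < f i})"
    unfolding A_def using fS by (simp add: S_def)
  have "B = prod.swap ` A" unfolding A_def B_def by auto
  moreover have "inj_on prod.swap A" by (metis inj_on_def swap_swap)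
  ultimately have cB: "card B = card A" by (simp add: card_image)
  have "A \<union> B = D"
  proof
    show "A \<union> B \<subseteq> D" unfolding A_def B_def D_def by auto
    show "D \<subseteq> A \<union> B"
    proof
      fix x assume "x \<in> D"
      then obtain i j where x: "x = (i,j)" "i \<in> S" "j \<in> S" "i \<noteq> j" unfolding D_def by auto
      have "f i \<noteq> f j" using inj x unfolding S_def inj_on_def by auto
      then show "x \<in> A \<union> B" using x unfolding A_def B_def by (auto simp: neq_iff)
    qed
  qed
  moreover have "A \<inter> B = {}" unfolding A_def B_def by auto
  moreover have "finite A" "finite B" unfolding A_def B_def using fS by auto
  ultimately have "card D = card A + card B" by (metis card_Un_disjoint)
  moreover have "card D = n * n - n"
  proof -
    have "{(i,i)| i. i \<in> S} = (\<lambda>i. (i,i)) ` S" by auto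
    then have c1: "card {(i,i)| i. i \<in> S} = n" by (simp add: card_image inj_on_def S_def)
    have "{(i,i)| i. i \<in> S} \<subseteq> S \<times> S" by auto
    then have "card D = card (S \<times> S) - card {(i,i)| i. i \<in> S}"
      unfolding D_def by (meson card_Diff_subset finite_subset fS finite_SigmaI)
    then show ?thesis using c1 by (simp add: S_def card_cartesian_product)
  qed
  ultimately show ?thesis using cA cB by (simp add: diff_mult_distrib2)
qed

lemma beta_sum:
  fixes w :: "'c \<Rightarrow> real" and r f :: "'c \<Rightarrow> nat"
  assumes fC: "finite C" and fT: "finite T" and img: "\<pi> ` C \<subseteq> T"
    and rf: "\<And>c. c \<in> C \<Longrightarrow> 1 \<le> r c \<and> r c \<le> f c"
  shows "(\<Sum>t\<in>T. infsum (\<lambda>\<tau>. \<Sum>c\<in>{c\<in>C. (r c \<le> \<tau> \<and> \<tau> < f c) \<and> \<pi> c = t}. w c) {1..})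
        = (\<Sum>c\<in>C. w c * (real (f c) - real (r c)))"
proof -
  define Mx where "Mx = (\<Sum>c\<in>C. f c) + 1"
  have fle: "f c < Mx" if "c \<in> C" for c
    using member_le_sum[of c C f] fC that unfolding Mx_def by simp
  have step: "infsum (\<lambda>\<tau>. \<Sum>c\<in>{c\<in>C. (r c \<le> \<tau> \<and> \<tau> < f c) \<and> \<pi> c = t}. w c) {1..}
       = (\<Sum>c\<in>{c\<in>C. \<pi> c = t}. w c * (real (f c) - real (r c)))" for t
  proof -
    define g where "g = (\<lambda>\<tau>. \<Sum>c\<in>{c\<in>C. (r c \<le> \<tau> \<and> \<tau> < f c) \<and> \<pi> c = t}. w c)"
    have "infsum g {1..} = infsum g {1..<Mx}"
    proof (rule infsum_cong_neutral)
      fix x assume "x \<in> {1..} - {1..<Mx}"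
      then have "x \<ge> Mx" by auto
      then have e: "{c\<in>C. (r c \<le> x \<and> x < f c) \<and> \<pi> c = t} = {}" using fle by force
      show "g x = 0" unfolding g_def by (subst e) simp
    qed auto
    also have "\<dots> = sum g {1..<Mx}" by simp
    also have "\<dots> = (\<Sum>\<tau>\<in>{1..<Mx}. \<Sum>c\<in>{c\<in>C. \<pi> c = t}. if r c \<le> \<tau> \<and> \<tau> < f c then w c else 0)"
    proof (rule sum.cong)
      fix \<tau> show "g \<tau> = (\<Sum>c\<in>{c\<in>C. \<pi> c = t}. if r c \<le> \<tau> \<and> \<tau> < f c then w c else 0)"
        unfolding g_def using fC
        by (subst sum.inter_filter[symmetric]) (auto intro!: sum.cong)
    qed simp
    also have "\<dots> = (\<Sum>c\<in>{c\<in>C. \<pi> c = t}. \<Sum>\<tau>\<in>{1..<Mx}. if r c \<le> \<tau> \<and> \<tau> < f c then w c else 0)"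
      by (rule sum.swap)
    also have "\<dots> = (\<Sum>c\<in>{c\<in>C. \<pi> c = t}. w c * (real (f c) - real (r c)))"
    proof (rule sum.cong)
      fix c assume "c \<in> {c\<in>C. \<pi> c = t}"
      then have c: "c \<in> C" by simp
      have "(\<Sum>\<tau>\<in>{1..<Mx}. if r c \<le> \<tau> \<and> \<tau> < f c then w c else 0) = (\<Sum>\<tau>\<in>{\<tau>\<in>{1..<Mx}. r c \<le> \<tau> \<and> \<tau> < f c}. w c)"
        by (subst sum.inter_filter) auto
      also have "{\<tau>\<in>{1..<Mx}. r c \<le> \<tau> \<and> \<tau> < f c} = {r c..<f c}" using rf[OF c] fle[OF c] by auto
      finally show "(\<Sum>\<tau>\<in>{1..<Mx}. if r c \<le> \<tau> \<and> \<tau> < f c then w c else 0) = w c * (real (f c) - real (r c))"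
        using rf[OF c] by (simp add: of_nat_diff mult.commute)
    qed simp
    finally show ?thesis unfolding g_def .
  qed
  have "(\<Sum>t\<in>T. infsum (\<lambda>\<tau>. \<Sum>c\<in>{c\<in>C. (r c \<le> \<tau> \<and> \<tau> < f c) \<and> \<pi> c = t}. w c) {1..})
      = (\<Sum>t\<in>T. \<Sum>c\<in>{c\<in>C. \<pi> c = t}. w c * (real (f c) - real (r c)))"
    using step by simp
  also have "\<dots> = (\<Sum>c\<in>C. w c * (real (f c) - real (r c)))"
    using sum.group[OF fC fT img] by simp
  finally show ?thesis .
qed

lemma sum_Un3_le:
  fixes g :: "'a \<Rightarrow> real"
  assumes "finite A" "finite B" "finite C" "\<And>x. x \<in> A \<union> B \<union> C \<Longrightarrow> g x \<ge> 0"
  shows "sum g (A \<union> B \<union> C) \<le> sum g A + sum g B + sum g C"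
proof -
  have n1: "sum g (A\<inter>B) \<ge> 0" by (rule sum_nonneg) (use assms(4) in auto)
  have n2: "sum g ((A\<union>B)\<inter>C) \<ge> 0" by (rule sum_nonneg) (use assms(4) in auto)
  have "sum g (A \<union> B) \<le> sum g A + sum g B"
    using sum_Un[OF assms(1,2), of g] n1 by linarith
  moreover have "sum g (A \<union> B \<union> C) \<le> sum g (A \<union> B) + sum g C"
    using sum_Un[of "A\<union>B" C g] assms(1-3) n2 by simp
  ultimately show ?thesis by linarith
qed



lemma imp_alg: "(W::real)*(a + (D+1)/2 + b) + W*h + D*L = W*(D-1)/2 + W*h + D*L + W*(1+a+b)"
  by (simp add: field_simps)

theorem mainTheorem4:
  fixes N :: "('s, 't, 'r, 'd) network" and K :: "('s, 'd, 'p) packets"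
    and asg :: "('t, 'r, 'p) assignment" and tx :: "'p \<times> nat \<Rightarrow> nat" and \<epsilon> :: real
  assumes "wf_network N" and "wf_packets N K" and "valid_run N K asg tx" and "\<epsilon> > 0"
  shows "ALG N K asg tx \<le> (2 + \<epsilon>) / \<epsilon> * Dual N K asg tx \<epsilon>"
proof -
  note wfN = assms(1)[unfolded wf_network_def]
  note wfK = assms(2)[unfolded wf_packets_def]
  have vd: "valid_decisions N K asg tx" and vs: "valid_schedule N K asg tx"
    using assms(3) by (auto simp: valid_run_def)
  define C where "C = chunks N K asg"
  define w where "w = cweight N K asg"
  define A where "A = {p\<in>Pi K. asg p \<noteq> None}"
  define e where "e p = the (asg p)" for p
  define d where "d p = dE N (e p)" for p
  have finPi: "finite (Pi K)" using wfK by simp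
  have finA: "finite A" using finPi A_def by simp
  have APi: "A \<subseteq> Pi K" unfolding A_def by auto
  have C_eq: "C = Sigma A (\<lambda>p. {..<d p})" unfolding C_def chunks_def A_def d_def e_def by auto
  have finC: "finite C" using C_eq finA by simp
  have cedge_eq: "cedge asg c = e (fst c)" for c by (simp add: cedge_def e_def)
  have w_eq: "w c = wt K (fst c) / real (d (fst c))" for c
    by (simp add: w_def cweight_def cedge_eq d_def)
  have eA: "e p \<in> Epk N K p" if "p \<in> A" for p
  proof -
    from vd that obtain x where "is_arg_min (imp N K asg tx p) (\<lambda>e. e \<in> Epk N K p) x" and
       "(if p \<in> Pl N K \<and> wt K p * real (lat N K p) \<le> imp N K asg tx p x then asg p = None else asg p = Some x)"
      unfolding valid_decisions_def A_def by blast
    then show ?thesis using that unfolding A_def e_def is_arg_min_def by (auto split: if_splits)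
  qed
  have eER: "e p \<in> ER N" if "p\<in>A" for p using eA[OF that] unfolding Epk_def by auto
  have d1: "d p \<ge> 1" if "p \<in> A" for p using eER[OF that] wfN unfolding d_def by auto
  have asgA: "asg p = Some (e p)" if "p\<in>A" for p using that unfolding A_def e_def by auto
  have relpos: "rel K p \<ge> 1" if "p \<in> Pi K" for p using wfK that by auto
  have wpos: "wt K p > 0" if "p \<in> Pi K" for p using wfK that by auto
  have CA: "fst c \<in> A" if "c\<in>C" for c using C_eq that by auto
  have wnn: "w c \<ge> 0" if "c \<in> C" for c
    using w_eq[of c] wpos[of "fst c"] CA[OF that] APi by auto
  have sched1: "\<And>c. c\<in>C \<Longrightarrow> rel K (fst c) \<le> tx c" using vs unfolding C_def valid_schedule_def by auto
  have sched2: "\<And>\<tau>. \<tau> \<ge> 1 \<Longrightarrow> \<exists>L. distinct L \<and> set L = pending N K asg tx \<tau> \<and>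
      sorted_wrt (chunk_before N K asg) L \<and> {c\<in>C. tx c = \<tau>} = greedy asg L"
    using vs unfolding C_def valid_schedule_def by auto
  have ord: "trans (prec K)" "irrefl (prec K)" "total_on (Pi K) (prec K)"
    using wfK unfolding strict_linear_order_on_def by auto
  have block: "\<exists>c'\<in>C. tx c' = \<tau> \<and> adjacent (cedge asg c') (cedge asg c) \<and> chunk_before N K asg c' c"
    if c: "c \<in> C" "rel K (fst c) \<le> \<tau>" "\<tau> < tx c" for c \<tau>
  proof -
    have "\<tau> \<ge> 1" using relpos[of "fst c"] CA[OF c(1)] APi c(2) by auto
    then obtain L where L: "distinct L" "set L = pending N K asg tx \<tau>"
      "sorted_wrt (chunk_before N K asg) L" "{c\<in>C. tx c = \<tau>} = greedy asg L" using sched2 by blast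
    have "c \<in> set L" using L c unfolding pending_def C_def by auto
    moreover have "c \<notin> greedy asg L" using L(4) c by auto
    ultimately obtain xs ys c' where h: "L = xs @ c # ys" "c' \<in> set xs" "c' \<in> greedy asg L"
      "adjacent (cedge asg c') (cedge asg c)"
      using greedy_block by blast
    have "chunk_before N K asg c' c" using L(3) h(1,2) by (auto simp: sorted_wrt_append)
    moreover have "c' \<in> C" "tx c' = \<tau>" using L(4) h(3) by blast+
    ultimately show ?thesis using h(4) by blast
  qed
  have txinj: "c1 = c2" if t: "c1 \<in> C" "c2\<in>C" "fst c1 = fst c2" "tx c1 = tx c2" for c1 c2
  proof (rule ccontr)
    assume ne: "c1 \<noteq> c2"
    have "tx c1 \<ge> 1" using sched1[OF t(1)] relpos[of "fst c1"] CA[OF t(1)] APi by auto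
    then obtain L where L: "{c\<in>C. tx c = tx c1} = greedy asg L" using sched2 by blast
    have "c1 \<in> greedy asg L" "c2 \<in> greedy asg L" using L t by auto
    then have "\<not> adjacent (cedge asg c1) (cedge asg c2)" using greedy_indep ne by blast
    moreover have "cedge asg c1 = cedge asg c2" using t cedge_eq by simp
    ultimately show False using adjacent_refl by metis
  qed
  define Pa where "Pa = Sigma C (\<lambda>c. {c'\<in>C. fst c' = fst c \<and> tx c' < tx c})"
  define Pb where "Pb = Sigma C (\<lambda>c. HS N K asg tx (fst c) (e (fst c)))"
  define Pc where "Pc = prod.swap ` Sigma C (\<lambda>c'. LS N K asg tx (fst c') (e (fst c')))"
  have classify: "(c, c') \<in> Pa \<union> Pb \<union> Pc"
    if h: "c \<in> C" "c' \<in> C" "tx c' < tx c" "rel K (fst c) \<le> tx c'"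
      "adjacent (cedge asg c') (cedge asg c)" "chunk_before N K asg c' c" for c c'
  proof -
    obtain p i where ci: "c = (p,i)" by (cases c)
    obtain q j where cj: "c' = (q,j)" by (cases c')
    have pq: "p \<in> Pi K" "q \<in> Pi K" using CA h(1,2) APi ci cj by auto
    have wc: "cweight N K asg c = wt K p / real (dE N (e p))" using ci by (simp add: cweight_def cedge_eq)
    have wc': "cweight N K asg c' = wt K q / real (dE N (e q))" using cj by (simp add: cweight_def cedge_eq)
    have cp: "cedge asg c = e p" using ci cedge_eq[of c] by simp
    have cq: "cedge asg c' = e q" using cj cedge_eq[of c'] by simp
    have fc: "fst c = p" "fst c' = q" using ci cj by simp_all
    have "q = p \<or> (q,p) \<in> prec K \<or> (p,q) \<in> prec K" using ord(3) pq unfolding total_on_def by blast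
    moreover
    { assume 1: "q = p"
      have "c' \<in> {c'\<in>C. fst c' = fst c \<and> tx c' < tx c}" using h(2,3) fc 1 by simp
      then have ?thesis unfolding Pa_def using h(1) by blast }
    moreover
    { assume 2: "(q,p) \<in> prec K"
      have ge: "cweight N K asg c' \<ge> cweight N K asg c" using h(6) unfolding chunk_before_def by linarith
      have "c' \<in> Bset N K asg tx p" unfolding Bset_def using h(2,4) 2 fc C_def by simp
      moreover have "adjacent (cedge asg c') (e p)" using h(5) cp by simp
      moreover have "cweight N K asg c' \<ge> wt K p / real (dE N (e p))" using ge wc by simp
      ultimately have "c' \<in> HS N K asg tx p (e p)" unfolding HS_def AdjS_def by simp
      then have ?thesis unfolding Pb_def using h(1) fc by blast }
    moreover
    { assume 3: "(p,q) \<in> prec K"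
      have "\<not> ((q,p) \<in> prec K \<or> q = p)" using 3 ord(1,2) unfolding trans_def irrefl_def by blast
      then have lt: "cweight N K asg c < cweight N K asg c'" using h(6) fc unfolding chunk_before_def by auto
      have "rel K q \<le> tx c" using sched1[OF h(2)] h(3) fc by simp
      then have "c \<in> Bset N K asg tx q" unfolding Bset_def using h(1) 3 fc C_def by simp
      moreover have "adjacent (cedge asg c) (e q)" using h(5) cq unfolding adjacent_def by auto
      moreover have "\<not> cweight N K asg c \<ge> wt K q / real (dE N (e q))" using lt wc' by simp
      ultimately have "c \<in> LS N K asg tx q (e q)" unfolding LS_def HS_def AdjS_def by simp
      then have "(c', c) \<in> Sigma C (\<lambda>c'. LS N K asg tx (fst c') (e (fst c')))" using h(2) fc by simp
      then have "(c, c') \<in> Pc" unfolding Pc_def by (rule rev_image_eqI) simp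
      then have ?thesis by (rule UnI2) }
    ultimately show ?thesis by argo
  qed
  define wait where "wait c = {rel K (fst c)..<tx c}" for c
  define bl where "bl c \<tau> = (SOME c'. c'\<in>C \<and> tx c' = \<tau> \<and> adjacent (cedge asg c') (cedge asg c) \<and> chunk_before N K asg c' c)" for c \<tau>
  have bl: "bl c \<tau> \<in> C \<and> tx (bl c \<tau>) = \<tau> \<and> adjacent (cedge asg (bl c \<tau>)) (cedge asg c) \<and> chunk_before N K asg (bl c \<tau>) c"
    if "c\<in>C" "\<tau> \<in> wait c" for c \<tau>
  proof -
    have "rel K (fst c) \<le> \<tau>" "\<tau> < tx c" using that(2) unfolding wait_def by auto
    then have ex: "\<exists>c'. c'\<in>C \<and> tx c' = \<tau> \<and> adjacent (cedge asg c') (cedge asg c) \<and> chunk_before N K asg c' c"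
      using block[OF that(1)] by blast
    show ?thesis unfolding bl_def by (rule someI_ex[OF ex])
  qed
  define G where "G = Sigma C wait"
  define gg where "gg = (\<lambda>x. (fst x, bl (fst x) (snd x)))"
  have finG: "finite G" using finC unfolding G_def wait_def by auto
  have injg: "inj_on gg G"
  proof (rule inj_onI)
    fix x y assume xy: "x \<in> G" "y \<in> G" "gg x = gg y"
    then have f: "fst x = fst y" unfolding gg_def by auto
    then have "tx (bl (fst x) (snd x)) = tx (bl (fst x) (snd y))" using xy(3) unfolding gg_def by auto
    then have "snd x = snd y" using bl[of "fst x" "snd x"] bl[of "fst y" "snd y"] xy(1,2) f unfolding G_def by auto
    then show "x = y" using f by (simp add: prod_eq_iff)
  qed
  have ggsub: "gg ` G \<subseteq> Pa \<union> Pb \<union> Pc"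
  proof
    fix y assume "y \<in> gg ` G"
    then obtain c \<tau> where x: "c \<in> C" "\<tau> \<in> wait c" "y = (c, bl c \<tau>)" unfolding G_def gg_def by auto
    have b: "bl c \<tau> \<in> C" "tx (bl c \<tau>) = \<tau>" "adjacent (cedge asg (bl c \<tau>)) (cedge asg c)" "chunk_before N K asg (bl c \<tau>) c"
      using bl[OF x(1,2)] by auto
    have "rel K (fst c) \<le> \<tau>" "\<tau> < tx c" using x(2) unfolding wait_def by auto
    then show "y \<in> Pa \<union> Pb \<union> Pc" unfolding x(3)
      using classify[OF x(1) b(1)] b by simp
  qed
  have finPa: "finite Pa" unfolding Pa_def using finC by auto
  have HSC: "HS N K asg tx p x \<subseteq> C" for p x unfolding HS_def AdjS_def Bset_def C_def by auto
  have LSC: "LS N K asg tx p x \<subseteq> C" for p x unfolding LS_def HS_def AdjS_def Bset_def C_def by auto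
  have finHS: "finite (HS N K asg tx p x)" for p x using HSC finC finite_subset by blast
  have finLS: "finite (LS N K asg tx p x)" for p x using LSC finC finite_subset by blast
  have finPb: "finite Pb" unfolding Pb_def using finC finHS by auto
  have finPc: "finite Pc" unfolding Pc_def using finC finLS by auto
  have PC: "fst y \<in> C" if "y \<in> Pa \<union> Pb \<union> Pc" for y
    using that unfolding Pa_def Pb_def Pc_def by (fastforce dest: subsetD[OF HSC] subsetD[OF LSC])
  have wait_sum: "(\<Sum>c\<in>C. w c * real (tx c - rel K (fst c))) \<le>
      (\<Sum>x\<in>Pa. w (fst x)) + (\<Sum>x\<in>Pb. w (fst x)) + (\<Sum>x\<in>Pc. w (fst x))"
  proof -
    have "(\<Sum>c\<in>C. w c * real (tx c - rel K (fst c))) = (\<Sum>c\<in>C. \<Sum>\<tau>\<in>wait c. w c)"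
      by (rule sum.cong) (simp_all add: wait_def)
    also have "\<dots> = (\<Sum>x\<in>G. w (fst x))"
      using sum.Sigma[of C wait "\<lambda>c \<tau>. w c"] finC unfolding G_def wait_def by (simp add: split_def)
    also have "\<dots> = (\<Sum>x\<in>gg ` G. w (fst x))"
      using sum.reindex[OF injg, of "\<lambda>x. w (fst x)"] by (simp add: gg_def o_def)
    also have "\<dots> \<le> (\<Sum>x\<in>Pa \<union> Pb \<union> Pc. w (fst x))"
    proof (rule sum_mono2)
      show "finite (Pa \<union> Pb \<union> Pc)" using finPa finPb finPc by simp
      show "gg ` G \<subseteq> Pa \<union> Pb \<union> Pc" by (rule ggsub)
      show "0 \<le> w (fst b)" if "b \<in> Pa \<union> Pb \<union> Pc - gg ` G" for b using that PC wnn by blast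
    qed
    also have "\<dots> \<le> (\<Sum>x\<in>Pa. w (fst x)) + (\<Sum>x\<in>Pb. w (fst x)) + (\<Sum>x\<in>Pc. w (fst x))"
      by (rule sum_Un3_le) (use finPa finPb finPc PC wnn in blast)+
    finally show ?thesis .
  qed

  have sumC: "(\<Sum>c\<in>C. f c) = (\<Sum>p\<in>A. \<Sum>i<d p. f (p,i))" for f :: "'p \<times> nat \<Rightarrow> real"
    unfolding C_eq using sum.Sigma[of A "\<lambda>p. {..<d p}" "\<lambda>p i. f (p,i)"] finA by simp
  have sumPa: "(\<Sum>x\<in>Pa. w (fst x)) = (\<Sum>p\<in>A. wt K p * (real (d p) - 1) / 2)"
  proof -
    have "(\<Sum>x\<in>Pa. w (fst x)) = (\<Sum>c\<in>C. \<Sum>c'\<in>{c'\<in>C. fst c' = fst c \<and> tx c' < tx c}. w c)"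
      unfolding Pa_def using sum.Sigma[of C "\<lambda>c. {c'\<in>C. fst c' = fst c \<and> tx c' < tx c}" "\<lambda>c c'. w c"] finC
      by (simp add: split_def)
    also have "\<dots> = (\<Sum>c\<in>C. w c * real (card {c'\<in>C. fst c' = fst c \<and> tx c' < tx c}))"
      by (simp add: mult.commute)
    also have "\<dots> = (\<Sum>p\<in>A. \<Sum>i<d p. w (p,i) * real (card {c'\<in>C. fst c' = p \<and> tx c' < tx (p,i)}))"
      using sumC[of "\<lambda>c. w c * real (card {c'\<in>C. fst c' = fst c \<and> tx c' < tx c})"] by simp
    also have "\<dots> = (\<Sum>p\<in>A. wt K p * (real (d p) - 1) / 2)"
    proof (rule sum.cong)
      fix p assume p: "p \<in> A"
      have cs: "card {c'\<in>C. fst c' = p \<and> tx c' < tx (p,i)} = card {j. j < d p \<and> tx (p,j) < tx (p,i)}" for i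
      proof -
        have "{c'\<in>C. fst c' = p \<and> tx c' < tx (p,i)} = (\<lambda>j. (p,j)) ` {j. j < d p \<and> tx (p,j) < tx (p,i)}"
          unfolding C_eq using p by auto
        then show ?thesis by (simp add: card_image inj_on_def)
      qed
      have inj: "inj_on (\<lambda>j. tx (p,j)) {..<d p}"
        by (rule inj_onI) (use txinj[of "(p, _)" "(p, _)"] p C_eq in auto)
      have cnt: "2 * (\<Sum>i<d p. card {j. j < d p \<and> tx (p,j) < tx (p,i)}) = d p * (d p - 1)"
        by (rule count_pairs[OF inj])
      have "(\<Sum>i<d p. w (p,i) * real (card {c'\<in>C. fst c' = p \<and> tx c' < tx (p,i)}))
          = wt K p / real (d p) * real (\<Sum>i<d p. card {j. j < d p \<and> tx (p,j) < tx (p,i)})"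
        by (simp add: cs w_eq sum_distrib_left)
      also have "real (\<Sum>i<d p. card {j. j < d p \<and> tx (p,j) < tx (p,i)}) = real (d p) * (real (d p) - 1) / 2"
      proof -
        have "real (2 * (\<Sum>i<d p. card {j. j < d p \<and> tx (p,j) < tx (p,i)})) = real (d p * (d p - 1))"
          using cnt by simp
        then show ?thesis using d1[OF p] by (simp add: of_nat_diff)
      qed
      finally show "(\<Sum>i<d p. w (p,i) * real (card {c'\<in>C. fst c' = p \<and> tx c' < tx (p,i)})) = wt K p * (real (d p) - 1) / 2"
        using d1[OF p] by simp
    qed simp
    finally show ?thesis .
  qed
  have sumPb: "(\<Sum>x\<in>Pb. w (fst x)) = (\<Sum>p\<in>A. wt K p * real (card (HS N K asg tx p (e p))))"
  proof -
    have "(\<Sum>x\<in>Pb. w (fst x)) = (\<Sum>c\<in>C. \<Sum>c'\<in>HS N K asg tx (fst c) (e (fst c)). w c)"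
      unfolding Pb_def using sum.Sigma[of C "\<lambda>c. HS N K asg tx (fst c) (e (fst c))" "\<lambda>c c'. w c"] finC finHS
      by (simp add: split_def)
    also have "\<dots> = (\<Sum>c\<in>C. w c * real (card (HS N K asg tx (fst c) (e (fst c)))))"
      by (simp add: mult.commute)
    also have "\<dots> = (\<Sum>p\<in>A. \<Sum>i<d p. w (p,i) * real (card (HS N K asg tx p (e p))))"
      using sumC[of "\<lambda>c. w c * real (card (HS N K asg tx (fst c) (e (fst c))))"] by simp
    also have "\<dots> = (\<Sum>p\<in>A. wt K p * real (card (HS N K asg tx p (e p))))"
    proof (rule sum.cong)
      fix p assume "p \<in> A"
      then have "d p \<noteq> 0" using d1 by force
      then show "(\<Sum>i<d p. w (p,i) * real (card (HS N K asg tx p (e p)))) = wt K p * real (card (HS N K asg tx p (e p)))"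
        by (simp add: w_eq)
    qed simp
    finally show ?thesis .
  qed
  have sumPc: "(\<Sum>x\<in>Pc. w (fst x)) = (\<Sum>p\<in>A. real (d p) * (\<Sum>c\<in>LS N K asg tx p (e p). w c))"
  proof -
    have "(\<Sum>x\<in>Pc. w (fst x)) = (\<Sum>x\<in>Sigma C (\<lambda>c'. LS N K asg tx (fst c') (e (fst c'))). w (snd x))"
      unfolding Pc_def by (subst sum.reindex) (auto simp: inj_on_def)
    also have "\<dots> = (\<Sum>c'\<in>C. \<Sum>c\<in>LS N K asg tx (fst c') (e (fst c')). w c)"
      using sum.Sigma[of C "\<lambda>c'. LS N K asg tx (fst c') (e (fst c'))" "\<lambda>c' c. w c"] finC finLS
      by (simp add: split_def)
    also have "\<dots> = (\<Sum>p\<in>A. \<Sum>i<d p. \<Sum>c\<in>LS N K asg tx p (e p). w c)"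
      using sumC[of "\<lambda>c'. \<Sum>c\<in>LS N K asg tx (fst c') (e (fst c')). w c"] by simp
    also have "\<dots> = (\<Sum>p\<in>A. real (d p) * (\<Sum>c\<in>LS N K asg tx p (e p). w c))"
      by simp
    finally show ?thesis .
  qed

  define F where "F = (\<Sum>p\<in>{p \<in> Pi K. asg p = None}. wt K p * real (lat N K p))"
  define Cc where "Cc = (\<Sum>c\<in>C. w c * (real (completion N asg tx c) - real (rel K (fst c))))"
  have ALG_eq: "ALG N K asg tx = F + Cc" unfolding ALG_def F_def Cc_def C_def w_def by simp
  have comp_ge: "rel K (fst c) \<le> completion N asg tx c" if "c \<in> C" for c
    using sched1[OF that] unfolding completion_def by simp
  have Cc_eq: "Cc = (\<Sum>c\<in>C. w c * real (tx c - rel K (fst c)))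
       + (\<Sum>p\<in>A. wt K p * (1 + real (dST N (fst (e p))) + real (dRD N (snd (e p)))))"
  proof -
    have "Cc = (\<Sum>c\<in>C. w c * real (tx c - rel K (fst c)) + w c * (1 + real (dST N (fst (e (fst c)))) + real (dRD N (snd (e (fst c))))))"
      unfolding Cc_def
    proof (rule sum.cong)
      fix c assume c: "c \<in> C"
      have "real (completion N asg tx c) - real (rel K (fst c)) = real (tx c - rel K (fst c)) + (1 + real (dST N (fst (e (fst c)))) + real (dRD N (snd (e (fst c)))))"
        using sched1[OF c] unfolding completion_def cedge_eq by (simp add: of_nat_diff)
      then show "w c * (real (completion N asg tx c) - real (rel K (fst c))) = w c * real (tx c - rel K (fst c)) + w c * (1 + real (dST N (fst (e (fst c)))) + real (dRD N (snd (e (fst c)))))"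
        by (simp add: algebra_simps)
    qed simp
    also have "\<dots> = (\<Sum>c\<in>C. w c * real (tx c - rel K (fst c))) + (\<Sum>c\<in>C. w c * (1 + real (dST N (fst (e (fst c)))) + real (dRD N (snd (e (fst c))))))"
      by (rule sum.distrib)
    also have "(\<Sum>c\<in>C. w c * (1 + real (dST N (fst (e (fst c)))) + real (dRD N (snd (e (fst c)))))) = (\<Sum>p\<in>A. \<Sum>i<d p. w (p,i) * (1 + real (dST N (fst (e p))) + real (dRD N (snd (e p)))))"
      using sumC[of "\<lambda>c. w c * (1 + real (dST N (fst (e (fst c)))) + real (dRD N (snd (e (fst c)))))"] by simp
    also have "\<dots> = (\<Sum>p\<in>A. wt K p * (1 + real (dST N (fst (e p))) + real (dRD N (snd (e p)))))"
    proof (rule sum.cong)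
      fix p assume "p \<in> A"
      then have "d p \<noteq> 0" using d1 by force
      then show "(\<Sum>i<d p. w (p,i) * (1 + real (dST N (fst (e p))) + real (dRD N (snd (e p))))) = wt K p * (1 + real (dST N (fst (e p))) + real (dRD N (snd (e p))))"
        by (simp add: w_eq)
    qed simp
    finally show ?thesis .
  qed
  have alpha_eq: "(\<Sum>p\<in>Pi K. alpha N K asg tx p) = F + (\<Sum>p\<in>A. imp N K asg tx p (e p))"
  proof -
    have "(\<Sum>p\<in>Pi K. alpha N K asg tx p) = (\<Sum>p\<in>Pi K. if asg p = None then wt K p * real (lat N K p) else imp N K asg tx p (e p))"
      by (rule sum.cong) (auto simp: alpha_def e_def split: option.splits)
    also have "\<dots> = F + (\<Sum>p\<in>A. imp N K asg tx p (e p))"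
    proof -
      have s1: "Pi K \<inter> {p. asg p = None} = {p \<in> Pi K. asg p = None}" by blast
      have s2: "Pi K \<inter> - {p. asg p = None} = A" unfolding A_def by auto
      show ?thesis unfolding F_def using sum.If_cases[OF finPi, of "\<lambda>p. asg p = None" "\<lambda>p. wt K p * real (lat N K p)" "\<lambda>p. imp N K asg tx p (e p)"]
        unfolding s1 s2 .
    qed
    finally show ?thesis .
  qed
  have imp_eq: "imp N K asg tx p (e p) = wt K p * (real (d p) - 1) / 2 + wt K p * real (card (HS N K asg tx p (e p)))
      + real (d p) * (\<Sum>c\<in>LS N K asg tx p (e p). w c) + wt K p * (1 + real (dST N (fst (e p))) + real (dRD N (snd (e p))))" for p
    unfolding imp_def d_def w_def by (rule imp_alg)
  have ALG_le: "F + Cc \<le> (\<Sum>p\<in>Pi K. alpha N K asg tx p)"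
  proof -
    let ?a = "\<lambda>p. wt K p * (real (d p) - 1) / 2"
    let ?b = "\<lambda>p. wt K p * real (card (HS N K asg tx p (e p)))"
    let ?c = "\<lambda>p. real (d p) * (\<Sum>c\<in>LS N K asg tx p (e p). w c)"
    let ?x = "\<lambda>p. wt K p * (1 + real (dST N (fst (e p))) + real (dRD N (snd (e p))))"
    have "(\<Sum>p\<in>A. imp N K asg tx p (e p)) = (\<Sum>p\<in>A. ?a p + ?b p + ?c p + ?x p)"
      by (rule sum.cong) (simp_all only: imp_eq)
    also have "\<dots> = sum ?a A + sum ?b A + sum ?c A + sum ?x A" by (simp only: sum.distrib)
    finally have "(\<Sum>p\<in>A. imp N K asg tx p (e p)) = sum ?a A + sum ?b A + sum ?c A + sum ?x A" .
    then show ?thesis using wait_sum sumPa sumPb sumPc Cc_eq alpha_eq by linarith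
  qed

  have rf: "1 \<le> rel K (fst c) \<and> rel K (fst c) \<le> completion N asg tx c" if "c \<in> C" for c
    using relpos[of "fst c"] CA[OF that] APi comp_ge[OF that] by auto
  have imgT: "(\<lambda>c. fst (cedge asg c)) ` C \<subseteq> nT N"
    using eER CA wfN cedge_eq by fastforce
  have imgR: "(\<lambda>c. snd (cedge asg c)) ` C \<subseteq> nR N"
    using eER CA wfN cedge_eq by fastforce
  have betaT_eq: "betaT N K asg tx t = (\<lambda>\<tau>. \<Sum>c\<in>{c\<in>C. (rel K (fst c) \<le> \<tau> \<and> \<tau> < completion N asg tx c) \<and> fst (cedge asg c) = t}. w c)" for t
    by (rule ext) (simp add: betaT_def active_def C_def w_def)
  have betaR_eq: "betaR N K asg tx r = (\<lambda>\<tau>. \<Sum>c\<in>{c\<in>C. (rel K (fst c) \<le> \<tau> \<and> \<tau> < completion N asg tx c) \<and> snd (cedge asg c) = r}. w c)" for r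
    by (rule ext) (simp add: betaR_def active_def C_def w_def)
  have sumT: "(\<Sum>t\<in>nT N. infsum (betaT N K asg tx t) {1..}) = Cc"
    unfolding betaT_eq Cc_def
    by (rule beta_sum[OF finC _ imgT rf]) (use wfN in auto)
  have sumR: "(\<Sum>r\<in>nR N. infsum (betaR N K asg tx r) {1..}) = Cc"
    unfolding betaR_eq Cc_def
    by (rule beta_sum[OF finC _ imgR rf]) (use wfN in auto)
  have Fnn: "F \<ge> 0" unfolding F_def
  proof (rule sum_nonneg)
    fix p assume "p \<in> {p \<in> Pi K. asg p = None}"
    then have "wt K p > 0" using wpos by auto
    then show "0 \<le> wt K p * real (lat N K p)" by simp
  qed
  have Ccnn: "Cc \<ge> 0" unfolding Cc_def
    by (rule sum_nonneg) (use wnn comp_ge in \<open>auto intro: mult_nonneg_nonneg\<close>)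
  define X where "X = (\<Sum>p\<in>Pi K. alpha N K asg tx p)"
  have D: "Dual N K asg tx \<epsilon> = X - 1 / (2 + \<epsilon>) * (Cc + Cc)"
    unfolding Dual_def X_def sumT sumR ..
  have eps: "\<epsilon> > 0" by (rule assms(4))
  have XF: "F + Cc \<le> X" using ALG_le X_def by simp
  have "(2 + \<epsilon>) * (F + Cc) \<le> (2 + \<epsilon>) * X" using XF eps by (intro mult_left_mono) auto
  then have key: "\<epsilon> * (F + Cc) \<le> (2 + \<epsilon>) * X - 2 * Cc" using Fnn by (simp add: algebra_simps)
  have "(2 + \<epsilon>) / \<epsilon> * Dual N K asg tx \<epsilon> = ((2 + \<epsilon>) * X - 2 * Cc) / \<epsilon>"
  proof -
    have ne: "2 + \<epsilon> \<noteq> 0" using eps by simp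
    have "(2 + \<epsilon>) * (X - 1 / (2 + \<epsilon>) * (Cc + Cc)) = (2 + \<epsilon>) * X - 2 * Cc"
      using ne by (simp add: right_diff_distrib)
    then show ?thesis unfolding D by (metis times_divide_eq_left)
  qed
  moreover have "F + Cc \<le> ((2 + \<epsilon>) * X - 2 * Cc) / \<epsilon>"
    using key eps by (simp add: pos_le_divide_eq mult.commute)
  ultimately show ?thesis using ALG_eq by (simp only:)
qed


end
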